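(* Let $k=2$. For every word $x_0\in\Sigma_2^*$ with $x_0\neq 111$, the sequence $x_{n+1}=\mathcal P_2(x_n)$ is eventually constant equal to $1001110$, i.e. there is $N$ with $x_n=1001110$ for all $n\ge N$; and for $x_0=111$ the sequence is constant equal to $111$. In particular, the only fixed points of $\mathcal P_2$ are $111$ and $1001110$, and $\mathcal P_2$ has no cycles of length $p\ge 2$.
   Context: Fix an integer $k\ge 2$ and the alphabet $\Sigma_k=\{0,1,\dots,k-1\}$. A word is a finite nonempty string of letters of $\Sigma_k$ (leading zeros allowed); $\Sigma_k^*$ denotes the set of words. For a word $x$, $|x|$ denotes its length and $|x|_i$ the number of occurrences of the letter $i$ in $x$. For a positive integer $c$, $[c]_k$ denotes its standard base-$k$ representation without leading zeros, viewed as a word over $\Sigma_k$; it has $\lfloor\log_k c\rfloor+1$ letters. The map $\mathcal P_k:\Sigma_k^*\to\Sigma_k^*$ is defined as follows: if $b_1>b_2>\dots>b_r$ are exactly the letters occurring in $x$ (i.e. those with $|x|_{b_j}\neq 0$), then $\mathcal P_k(x)=[|x|_{b_1}]_k\,b_1\,[|x|_{b_2}]_k\,b_2\cdots[|x|_{b_r}]_k\,b_r$ (concatenation). For $k=2$, e.g. $\mathcal P_2(111)=111$ (three 1's, written $11$ in binary, followed by the letter $1$). A fixed point is a word $x$ with $\mathcal P_k(x)=x$; a cycle of length $p$ is a list of $p$ distinct words $\overline x_1,\dots,\overline x_p$ with $\mathcal P_k(\overline x_i)=\overline x_{i+1}$ for $i<p$ and $\mathcal P_k(\overline x_p)=\overline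 x_1$. *)

theory Defs
  imports Main
begin

definition is_word :: "nat \<Rightarrow> nat list \<Rightarrow> bool" where
  "is_word k x \<longleftrightarrow> x \<noteq> [] \<and> set x \<subseteq> {..<k}"

text \<open>Standard base-k representation (most significant digit first, no leading zeros
  for c > 0); only used for positive c and k >= 2.\<close>
function base_repr :: "nat \<Rightarrow> nat \<Rightarrow> nat list" where
  "base_repr k c = (if k < 2 \<or> c < k then [c] else base_repr k (c div k) @ [c mod k])"
  by pat_completeness auto
termination
  by (relation "measure snd") (auto intro: div_less_dividend)

definition P :: "nat \<Rightarrow> nat list \<Rightarrow> nat list" where
  "P k x = concat (map (\<lambda>b. base_repr k (count_list x b) @ [b])
                       (filter (\<lambda>b. b \<in> set x) (rev [0..<k])))"

lemma "P 2 [1,1,1] = [1,1,1]" "P 2 [1,0,0,1,1,1,0] = [1,0,0,1,1,1,0]"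
  by (simp_all add: P_def upt_rec)

end

theory Submission imports Defs begin
definition W :: "nat \<Rightarrow> nat \<Rightarrow> nat list" where
  "W a b = (if a > 0 then base_repr 2 a @ [1] else []) @ (if b > 0 then base_repr 2 b @ [0] else [])"
definition F :: "nat \<times> nat \<Rightarrow> nat \<times> nat" where
  "F p = (count_list (W (fst p) (snd p)) 1, count_list (W (fst p) (snd p)) 0)"

lemma br: "base_repr 2 c = (if c < 2 then [c] else base_repr 2 (c div 2) @ [c mod 2])"
  by (subst base_repr.simps) simp
declare base_repr.simps[simp del]

lemma F8: "(F^^8) p = F(F(F(F(F(F(F(F p)))))))"
  by (simp add: numeral_eq_Suc)

lemma Fv:
  "F(0,1) = (1,1)"
  "F(0,2) = (1,2)"
  "F(0,3) = (2,1)"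
  "F(0,4) = (1,3)"
  "F(0,5) = (2,2)"
  "F(0,6) = (2,2)"
  "F(0,7) = (3,1)"
  "F(0,8) = (1,4)"
  "F(0,9) = (2,3)"
  "F(0,10) = (2,3)"
  "F(1,0) = (2,0)"
  "F(1,1) = (3,1)"
  "F(1,2) = (3,2)"
  "F(1,3) = (4,1)"
  "F(1,4) = (3,3)"
  "F(1,5) = (4,2)"
  "F(1,6) = (4,2)"
  "F(1,7) = (5,1)"
  "F(1,8) = (3,4)"
  "F(1,9) = (4,3)"
  "F(2,0) = (2,1)"
  "F(2,1) = (3,2)"
  "F(2,2) = (3,3)"
  "F(2,3) = (4,2)"
  "F(2,4) = (3,4)"
  "F(2,5) = (4,3)"
  "F(2,6) = (4,3)"
  "F(2,7) = (5,2)"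
  "F(2,8) = (3,5)"
  "F(3,0) = (3,0)"
  "F(3,1) = (4,1)"
  "F(3,2) = (4,2)"
  "F(3,3) = (5,1)"
  "F(3,4) = (4,3)"
  "F(3,5) = (5,2)"
  "F(3,6) = (5,2)"
  "F(3,7) = (6,1)"
  "F(4,0) = (2,2)"
  "F(4,1) = (3,3)"
  "F(4,2) = (3,4)"
  "F(4,3) = (4,3)"
  "F(4,4) = (3,5)"
  "F(4,5) = (4,4)"
  "F(4,6) = (4,4)"
  "F(5,0) = (3,1)"
  "F(5,1) = (4,2)"
  "F(5,2) = (4,3)"
  "F(5,3) = (5,2)"
  "F(5,4) = (4,4)"
  "F(5,5) = (5,3)"
  "F(6,0) = (3,1)"
  "F(6,1) = (4,2)"
  "F(6,2) = (4,3)"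
  "F(6,3) = (5,2)"
  "F(6,4) = (4,4)"
  "F(7,0) = (4,0)"
  "F(7,1) = (5,1)"
  "F(7,2) = (5,2)"
  "F(7,3) = (6,1)"
  "F(8,0) = (2,3)"
  "F(8,1) = (3,4)"
  "F(8,2) = (3,5)"
  "F(9,0) = (3,2)"
  "F(9,1) = (4,3)"
  "F(10,0) = (3,2)"
  by (simp_all add: F_def W_def br)
lemma T8:
  "(F^^8)(0,1) = (4,3)"
  "(F^^8)(0,2) = (4,3)"
  "(F^^8)(0,3) = (4,3)"
  "(F^^8)(0,4) = (4,3)"
  "(F^^8)(0,5) = (4,3)"
  "(F^^8)(0,6) = (4,3)"
  "(F^^8)(0,7) = (4,3)"
  "(F^^8)(0,8) = (4,3)"
  "(F^^8)(0,9) = (4,3)"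
  "(F^^8)(0,10) = (4,3)"
  "(F^^8)(1,0) = (4,3)"
  "(F^^8)(1,1) = (4,3)"
  "(F^^8)(1,2) = (4,3)"
  "(F^^8)(1,3) = (4,3)"
  "(F^^8)(1,4) = (4,3)"
  "(F^^8)(1,5) = (4,3)"
  "(F^^8)(1,6) = (4,3)"
  "(F^^8)(1,7) = (4,3)"
  "(F^^8)(1,8) = (4,3)"
  "(F^^8)(1,9) = (4,3)"
  "(F^^8)(2,0) = (4,3)"
  "(F^^8)(2,1) = (4,3)"
  "(F^^8)(2,2) = (4,3)"
  "(F^^8)(2,3) = (4,3)"
  "(F^^8)(2,4) = (4,3)"
  "(F^^8)(2,5) = (4,3)"
  "(F^^8)(2,6) = (4,3)"
  "(F^^8)(2,7) = (4,3)"
  "(F^^8)(2,8) = (4,3)"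
  "(F^^8)(3,1) = (4,3)"
  "(F^^8)(3,2) = (4,3)"
  "(F^^8)(3,3) = (4,3)"
  "(F^^8)(3,4) = (4,3)"
  "(F^^8)(3,5) = (4,3)"
  "(F^^8)(3,6) = (4,3)"
  "(F^^8)(3,7) = (4,3)"
  "(F^^8)(4,0) = (4,3)"
  "(F^^8)(4,1) = (4,3)"
  "(F^^8)(4,2) = (4,3)"
  "(F^^8)(4,3) = (4,3)"
  "(F^^8)(4,4) = (4,3)"
  "(F^^8)(4,5) = (4,3)"
  "(F^^8)(4,6) = (4,3)"
  "(F^^8)(5,0) = (4,3)"
  "(F^^8)(5,1) = (4,3)"
  "(F^^8)(5,2) = (4,3)"
  "(F^^8)(5,3) = (4,3)"
  "(F^^8)(5,4) = (4,3)"
  "(F^^8)(5,5) = (4,3)"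
  "(F^^8)(6,0) = (4,3)"
  "(F^^8)(6,1) = (4,3)"
  "(F^^8)(6,2) = (4,3)"
  "(F^^8)(6,3) = (4,3)"
  "(F^^8)(6,4) = (4,3)"
  "(F^^8)(7,0) = (4,3)"
  "(F^^8)(7,1) = (4,3)"
  "(F^^8)(7,2) = (4,3)"
  "(F^^8)(7,3) = (4,3)"
  "(F^^8)(8,0) = (4,3)"
  "(F^^8)(8,1) = (4,3)"
  "(F^^8)(8,2) = (4,3)"
  "(F^^8)(9,0) = (4,3)"
  "(F^^8)(9,1) = (4,3)"
  "(F^^8)(10,0) = (4,3)"
  by (simp_all only: F8 Fv)

lemma table:
  assumes "a + b \<le> 10" "(a,b)\<noteq>(0,0)" "(a,b)\<noteq>(3,0)"
  shows "(F^^8)(a,b) = (4,3)"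
proof -
  have A: "a = 0 \<or> a = 1 \<or> a = 2 \<or> a = 3 \<or> a = 4 \<or> a = 5 \<or> a = 6 \<or> a = 7 \<or> a = 8 \<or> a = 9 \<or> a = 10" using assms by arith
  have B: "b = 0 \<or> b = 1 \<or> b = 2 \<or> b = 3 \<or> b = 4 \<or> b = 5 \<or> b = 6 \<or> b = 7 \<or> b = 8 \<or> b = 9 \<or> b = 10" using assms by arith
  from A B assms show ?thesis
    by (elim disjE; simp only: T8; simp)
qed

lemma digits: "set (base_repr 2 c) \<subseteq> {0,1}"
proof (induction c rule: less_induct)
  case (less c)
  show ?case
  proof (cases "c < 2")
    case True then show ?thesis by (subst br) auto
  next
    case False
    then have "c div 2 < c" by simp
    with less have "set (base_repr 2 (c div 2)) \<subseteq> {0,1}" by blast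
    moreover have "c mod 2 \<in> {0,1}" by auto
    ultimately show ?thesis using False by (subst br) auto
  qed
qed

lemma len_up: "0 < c \<Longrightarrow> length (base_repr 2 c) \<le> (c+3) div 2"
proof (induction c rule: less_induct)
  case (less c)
  show ?case
  proof (cases "c < 4")
    case True
    then have "c = 1 \<or> c = 2 \<or> c = 3" using less.prems by arith
    then show ?thesis by (elim disjE) (simp_all add: br)
  next
    case False
    then have "c div 2 < c" "0 < c div 2" by auto
    with less have "length (base_repr 2 (c div 2)) \<le> (c div 2 + 3) div 2" by blast
    then show ?thesis using False by (subst br) auto
  qed
qed

lemma len_low: "c < 2 ^ length (base_repr 2 c)"
proof (induction c rule: less_induct)
  case (less c)
  show ?case
  proof (cases "c < 2")
    case True then show ?thesis by (subst br) auto
  next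
    case False
    then have "c div 2 < c" by simp
    with less have "c div 2 < 2 ^ length (base_repr 2 (c div 2))" by blast
    then show ?thesis using False by (subst br) auto
  qed
qed

lemma P_W: "P 2 x = W (count_list x 1) (count_list x 0)"
proof -
  have r: "rev [0..<2] = [1::nat,0]" by (simp add: upt_rec)
  have i: "(b \<in> set x) = (0 < count_list x b)" for b
    using count_list_0_iff[of x b] by auto
  show ?thesis unfolding P_def r W_def by (simp add: i)
qed

lemma cnt_sum: "set (x::nat list) \<subseteq> {0,1} \<Longrightarrow> count_list x 1 + count_list x 0 = length x"
  by (induction x) auto

lemma W_digits: "set (W a b) \<subseteq> {0,1}"
  using digits[of a] digits[of b] by (auto simp: W_def)

lemma F_sum: "fst (F p) + snd (F p) = length (W (fst p) (snd p))"
  unfolding F_def using cnt_sum[OF W_digits] by simp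

lemma iterP: "(P 2 ^^ Suc m) x = case_prod W ((F^^m)(count_list x 1, count_list x 0))"
proof (induction m)
  case 0 then show ?case by (simp add: P_W)
next
  case (Suc m)
  have "(P 2 ^^ Suc (Suc m)) x = P 2 ((P 2 ^^ Suc m) x)" by simp
  also have "\<dots> = case_prod W (F ((F^^m)(count_list x 1, count_list x 0)))"
    unfolding Suc by (simp add: P_W F_def split: prod.splits)
  finally show ?case by simp
qed

lemma F43: "F (4,3) = (4,3)" by (simp add: Fv)

lemma F43n: "(F^^n) (4,3) = (4,3)"
  by (induction n) (simp_all add: F43)

lemma reach: "(a,b) \<noteq> (0,0) \<Longrightarrow> (a,b) \<noteq> (3,0) \<Longrightarrow> \<exists>n. (F^^n)(a,b) = (4,3)"
proof (induction "a+b" arbitrary: a b rule: less_induct)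
  case less
  show ?case
  proof (cases "a + b \<le> 10")
    case True then show ?thesis using table less.prems by blast
  next
    case False
    obtain a' b' where ab: "F (a,b) = (a',b')" by fastforce
    have s: "a' + b' = length (W a b)" using F_sum[of "(a,b)"] ab by simp
    have la: "0 < a \<Longrightarrow> length (base_repr 2 a) \<le> (a+3) div 2" by (rule len_up)
    have lb: "0 < b \<Longrightarrow> length (base_repr 2 b) \<le> (b+3) div 2" by (rule len_up)
    have lt: "a' + b' < a + b" unfolding s W_def using la lb False by auto
    have "length (W a b) > 0" using less.prems by (auto simp: W_def)
    then have n0: "(a',b') \<noteq> (0,0)" using s by auto
    have n3: "(a',b') \<noteq> (3,0)"
    proof
      assume e: "(a',b') = (3,0)"
      show False
      proof (cases "b > 0")
        case True
        then have "count_list (W a b) 0 > 0" by (simp add: W_def)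
        then show False using ab e by (simp add: F_def)
      next
        case False
        with \<open>\<not> a + b \<le> 10\<close> have a11: "a \<ge> 11" by simp
        have "a < 2 ^ length (base_repr 2 a)" by (rule len_low)
        then have "length (base_repr 2 a) \<ge> 4"
        proof -
          assume h: "a < 2 ^ length (base_repr 2 a)"
          show ?thesis
          proof (rule ccontr)
            assume "\<not> 4 \<le> length (base_repr 2 a)"
            then have "2 ^ length (base_repr 2 a) \<le> (2::nat) ^ 3"
              by (intro power_increasing) auto
            with h a11 show False by simp
          qed
        qed
        then have "length (W a b) \<ge> 5" using a11 False by (simp add: W_def)
        then show False using s e by simp
      qed
    qed
    obtain n where "(F^^n)(a',b') = (4,3)" using less.hyps[OF lt n0 n3] by blast
    then have "(F^^Suc n)(a,b) = (4,3)" using ab by (simp add: funpow_Suc_right del: funpow.simps)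
    then show ?thesis by blast
  qed
qed

lemma W43: "W 4 3 = [1,0,0,1,1,1,0]" by (simp add: W_def br)

lemma main1:
  assumes "is_word 2 x0" "x0 \<noteq> [1,1,1]"
  shows "\<exists>N. \<forall>n\<ge>N. (P 2 ^^ n) x0 = [1,0,0,1,1,1,0]"
proof -
  have sx: "set x0 \<subseteq> {0,1}" "x0 \<noteq> []" using assms(1) by (auto simp: is_word_def)
  let ?a = "count_list x0 1" and ?b = "count_list x0 0"
  have sum: "?a + ?b = length x0" using cnt_sum[OF sx(1)] .
  have n0: "(?a,?b) \<noteq> (0,0)" using sum sx(2) by auto
  have n3: "(?a,?b) \<noteq> (3,0)"
  proof
    assume e: "(?a,?b) = (3,0)"
    then have "0 \<notin> set x0" using count_list_0_iff by fastforce
    with sx(1) have "\<forall>y\<in>set x0. y = 1" by auto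
    then have r: "x0 = replicate (length x0) 1" by (metis replicate_length_same)
    have "length x0 = 3" using sum e by simp
    with r have "x0 = replicate 3 1" by simp
    also have "replicate 3 (1::nat) = [1,1,1]" by (simp add: numeral_3_eq_3)
    finally show False using assms(2) by simp
  qed
  obtain n where hn: "(F^^n)(?a,?b) = (4,3)" using reach[OF n0 n3] by blast
  have "(P 2 ^^ m) x0 = [1,0,0,1,1,1,0]" if "m \<ge> Suc n" for m
  proof -
    define k where "k = m - Suc n"
    have m: "m = Suc (k + n)" using that unfolding k_def by simp
    have "(F^^(k+n))(?a,?b) = (F^^k)((F^^n)(?a,?b))" by (simp only: funpow_add comp_apply)
    also have "\<dots> = (4,3)" by (simp only: hn F43n)
    finally have "(F^^(k+n))(?a,?b) = (4,3)" .
    then show ?thesis unfolding m iterP by (simp add: W43)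
  qed
  then show ?thesis by blast
qed

lemma P111: "P 2 [1,1,1] = [1,1,1]" by (simp add: P_def upt_rec br)
lemma P111n: "(P 2 ^^ n) [1,1,1] = [1,1,1]" by (induction n) (simp_all only: funpow.simps comp_apply id_apply P111)

lemma fixn: "P 2 x = x \<Longrightarrow> (P 2 ^^ n) x = x" by (induction n) simp_all

theorem corollary1:
  shows "(\<forall>x0. is_word 2 x0 \<and> x0 \<noteq> [1,1,1] \<longrightarrow>
            (\<exists>N. \<forall>n\<ge>N. (P 2 ^^ n) x0 = [1,0,0,1,1,1,0]))
       \<and> (\<forall>n. (P 2 ^^ n) [1,1,1] = [1,1,1])
       \<and> {x. is_word 2 x \<and> P 2 x = x} = {[1,1,1], [1,0,0,1,1,1,0]}
       \<and> (\<forall>p xs. p \<ge> 2 \<longrightarrow> length xs = p \<longrightarrow> distinct xs \<longrightarrow> (\<forall>x\<in>set xs. is_word 2 x) \<longrightarrow>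
            \<not> (\<forall>i<p. P 2 (xs ! i) = xs ! ((i + 1) mod p)))"
proof (intro conjI allI impI)
  show "\<exists>N. \<forall>n\<ge>N. (P 2 ^^ n) x0 = [1,0,0,1,1,1,0]" if "is_word 2 x0 \<and> x0 \<noteq> [1,1,1]" for x0
    using main1 that by blast
  show "(P 2 ^^ n) [1,1,1] = [1,1,1]" for n by (rule P111n)
  show "{x. is_word 2 x \<and> P 2 x = x} = {[1,1,1], [1,0,0,1,1,1,0]}"
  proof
    show "{[1,1,1], [1,0,0,1,1,1,0]} \<subseteq> {x. is_word 2 x \<and> P 2 x = x}"
      by (auto simp: is_word_def P_def upt_rec br)
    show "{x. is_word 2 x \<and> P 2 x = x} \<subseteq> {[1,1,1], [1,0,0,1,1,1,0]}"
    proof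
      fix x assume "x \<in> {x. is_word 2 x \<and> P 2 x = x}"
      then have w: "is_word 2 x" and f: "P 2 x = x" by auto
      show "x \<in> {[1,1,1], [1,0,0,1,1,1,0]}"
      proof (cases "x = [1,1,1]")
        case False
        then obtain N where "\<forall>n\<ge>N. (P 2 ^^ n) x = [1,0,0,1,1,1,0]" using main1 w by blast
        then have "(P 2 ^^ N) x = [1,0,0,1,1,1,0]" by blast
        then show ?thesis using fixn[OF f] by simp
      qed simp
    qed
  qed
  fix p :: nat and xs :: "nat list list"
  assume p: "p \<ge> 2" and l: "length xs = p" and d: "distinct xs" and w: "\<forall>x\<in>set xs. is_word 2 x"
  show "\<not> (\<forall>i<p. P 2 (xs ! i) = xs ! ((i + 1) mod p))"
  proof
    assume c: "\<forall>i<p. P 2 (xs ! i) = xs ! ((i + 1) mod p)"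
    have it: "(P 2 ^^ j) (xs!0) = xs ! (j mod p)" for j
    proof (induction j)
      case 0 then show ?case using p by simp
    next
      case (Suc j)
      have "j mod p < p" using p by simp
      then have "P 2 (xs ! (j mod p)) = xs ! ((j mod p + 1) mod p)" using c by blast
      also have "(j mod p + 1) mod p = Suc j mod p" by (simp add: mod_Suc_eq)
      finally show ?case using Suc by simp
    qed
    have ne: "xs ! 0 \<noteq> xs ! 1" using d l p by (simp add: nth_eq_iff_index_eq)
    show False
    proof (cases "xs!0 = [1,1,1]")
      case True
      have "xs ! 1 = (P 2 ^^ 1) (xs!0)" using it[of 1] p by simp
      then show False using True ne P111 by (metis One_nat_def funpow.simps(2) funpow_0 comp_apply)
    next
      case False
      have "is_word 2 (xs!0)" using w l p by simp
      then obtain N where hN: "\<forall>n\<ge>N. (P 2 ^^ n) (xs!0) = [1,0,0,1,1,1,0]" using main1 False by blast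
      have "N*p \<ge> N" using p by simp
      then have e1: "xs ! 0 = [1,0,0,1,1,1,0]" using hN it[of "N*p"] by simp
      have "Suc (N*p) \<ge> N" using \<open>N*p \<ge> N\<close> by linarith
      moreover have "Suc (N*p) mod p = 1" using p by (simp add: mod_Suc)
      ultimately have "xs ! 1 = [1,0,0,1,1,1,0]"
        proof -
          assume h1: "Suc (N*p) \<ge> N" and h2: "Suc (N*p) mod p = 1"
          have "xs ! 1 = (P 2 ^^ Suc (N*p)) (xs!0)" using it[of "Suc (N*p)"] h2 by simp
          also have "\<dots> = [1,0,0,1,1,1,0]" using hN h1 by blast
          finally show ?thesis .
        qed
      then show False using e1 ne by simp
    qed
  qed
qed
end
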